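(* Let $(T,f,(\le_h))$ be an ordered merge tree. Then $\mathcal T(\mathcal L((T,f,(\le_h))))=(T,f,(\le_h))$.
   Context: A merge tree $(T,f)$: a finite rooted tree $T$ identified with its topological realisation, with a continuous $f\colon T\to\mathbb{R}\cup\{\infty\}$ strictly increasing towards the root, $f(v)=\infty$ iff $v$ is the root; lowest leaf at height $0$; $L(T)$ is the set of leaves. $T_x$ is the subtree of descendants of $x$; $\mathrm{lca}$ the lowest common ancestor; $\mathrm{anc}_h(x)$ the unique ancestor of $x$ at height $h\ge f(x)$; $\mathbb{L}_h=\{x:f(x)=h\}$. A layer-order is a family $(\le_h)_{h\ge0}$ of total orders on the $\mathbb{L}_h$ that is consistent ($h_1\le h_2$ and $x_1\le_{h_1}x_2$ imply $\mathrm{anc}_{h_2}(x_1)\le_{h_2}\mathrm{anc}_{h_2}(x_2)$); $(T,f,(\le_h))$ is an ordered merge tree. A leaf-order is a total order $\sqsubseteq_L$ on $L(T)$ such that $u_1\sqsubseteq_L u\sqsubseteq_L u_2$ implies $u\in T_{\mathrm{lca}(u_1,u_2)}$; $(T,f,\sqsubseteq_L)$ is a leaf-ordered merge tree. $\mathcal L((T,f,(\le_h)))=(T,f,\sqsubseteq_L)$ with $u_1\sqsubseteq_L u_2$ iff $\mathrm{anc}_h(u_1)\le_h\mathrm{anc}_h(u_2)$ for $h=\max(f(u_1),f(u_2))$. $\mathcal T((T,f,\sqsubseteq_L))=(T,f,(\le_h))$ with $x_1\le_h x_2$ (for $x_1,x_2\in\mathbb{L}_h$) iff $x_1=x_2$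 or $u_1\sqsubseteq_L u_2$ for all leaves $u_1\in T_{x_1}$, $u_2\in T_{x_2}$. *)

theory Defs
  imports Main "HOL-Library.Extended_Real"
begin

text \<open>
Concrete model of the topological realisation of a finite rooted tree with a height
function f (a merge tree).  Since f is continuous and strictly increasing along each edge, every
point in the half-open edge segment from v (inclusive) towards par v (exclusive) is
uniquely determined by its height; so a point of the realisation is a pair (v, h)
with v \<noteq> r and hgt v \<le> h < hgt (par v), or the root point (r, \<infinity>).
\<close>

definition mt_point :: "'v set \<Rightarrow> ('v \<Rightarrow> 'v) \<Rightarrow> 'v \<Rightarrow> ('v \<Rightarrow> ereal) \<Rightarrow> 'v \<times> ereal \<Rightarrow> bool" where
  "mt_point V par r hgt x \<longleftrightarrow> fst x \<in> V \<and>
     ((fst x = r \<and> snd x = \<infinity>) \<or>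
      (fst x \<noteq> r \<and> hgt (fst x) \<le> snd x \<and> snd x < hgt (par (fst x))))"

definition mt_anc_rel :: "('v \<Rightarrow> 'v) \<Rightarrow> 'v \<times> ereal \<Rightarrow> 'v \<times> ereal \<Rightarrow> bool" where
  "mt_anc_rel par x y \<longleftrightarrow> snd x \<le> snd y \<and> (\<exists>n. (par ^^ n) (fst x) = fst y)"

definition mt_subtree :: "'v set \<Rightarrow> ('v \<Rightarrow> 'v) \<Rightarrow> 'v \<Rightarrow> ('v \<Rightarrow> ereal) \<Rightarrow> 'v \<times> ereal \<Rightarrow> ('v \<times> ereal) set" where
  "mt_subtree V par r hgt x = {y. mt_point V par r hgt y \<and> mt_anc_rel par y x}"

definition mt_anc :: "'v set \<Rightarrow> ('v \<Rightarrow> 'v) \<Rightarrow> 'v \<Rightarrow> ('v \<Rightarrow> ereal) \<Rightarrow> ereal \<Rightarrow> 'v \<times> ereal \<Rightarrow> 'v \<times> ereal" where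
  "mt_anc V par r hgt h x = (THE y. mt_point V par r hgt y \<and> mt_anc_rel par x y \<and> snd y = h)"

definition mt_leaves :: "'v set \<Rightarrow> ('v \<Rightarrow> 'v) \<Rightarrow> 'v \<Rightarrow> ('v \<Rightarrow> ereal) \<Rightarrow> ('v \<times> ereal) set" where
  "mt_leaves V par r hgt = {x. mt_point V par r hgt x \<and> mt_subtree V par r hgt x = {x}}"

definition mt_layer :: "'v set \<Rightarrow> ('v \<Rightarrow> 'v) \<Rightarrow> 'v \<Rightarrow> ('v \<Rightarrow> ereal) \<Rightarrow> real \<Rightarrow> ('v \<times> ereal) set" where
  "mt_layer V par r hgt h = {x. mt_point V par r hgt x \<and> snd x = ereal h}"

definition merge_tree :: "'v set \<Rightarrow> ('v \<Rightarrow> 'v) \<Rightarrow> 'v \<Rightarrow> ('v \<Rightarrow> ereal) \<Rightarrow> bool" where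
  "merge_tree V par r hgt \<longleftrightarrow>
     finite V \<and> r \<in> V \<and> hgt r = \<infinity> \<and> par r = r \<and>
     (\<forall>v\<in>V - {r}. par v \<in> V \<and> hgt v \<noteq> -\<infinity> \<and> hgt v < hgt (par v)) \<and>
     (\<forall>v\<in>V. \<exists>n. (par ^^ n) v = r) \<and>
     (\<exists>u\<in>mt_leaves V par r hgt. snd u = 0) \<and>
     (\<forall>u\<in>mt_leaves V par r hgt. 0 \<le> snd u)"

definition layer_order :: "'v set \<Rightarrow> ('v \<Rightarrow> 'v) \<Rightarrow> 'v \<Rightarrow> ('v \<Rightarrow> ereal) \<Rightarrow> (real \<Rightarrow> ('v \<times> ereal) rel) \<Rightarrow> bool" where
  "layer_order V par r hgt R \<longleftrightarrow>
     (\<forall>h\<ge>0. R h \<subseteq> mt_layer V par r hgt h \<times> mt_layer V par r hgt h \<and>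
             linear_order_on (mt_layer V par r hgt h) (R h)) \<and>
     (\<forall>h1 h2 x1 x2. 0 \<le> h1 \<and> h1 \<le> h2 \<and> (x1, x2) \<in> R h1 \<longrightarrow>
        (mt_anc V par r hgt (ereal h2) x1, mt_anc V par r hgt (ereal h2) x2) \<in> R h2)"

definition ordered_merge_tree :: "'v set \<Rightarrow> ('v \<Rightarrow> 'v) \<Rightarrow> 'v \<Rightarrow> ('v \<Rightarrow> ereal) \<Rightarrow> (real \<Rightarrow> ('v \<times> ereal) rel) \<Rightarrow> bool" where
  "ordered_merge_tree V par r hgt R \<longleftrightarrow> merge_tree V par r hgt \<and> layer_order V par r hgt R"

definition leaf_order_of :: "'v set \<Rightarrow> ('v \<Rightarrow> 'v) \<Rightarrow> 'v \<Rightarrow> ('v \<Rightarrow> ereal) \<Rightarrow> (real \<Rightarrow> ('v \<times> ereal) rel) \<Rightarrow> ('v \<times> ereal) rel" where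
  "leaf_order_of V par r hgt R =
     {(u1, u2). u1 \<in> mt_leaves V par r hgt \<and> u2 \<in> mt_leaves V par r hgt \<and>
        (let h = max (snd u1) (snd u2) in
          (mt_anc V par r hgt h u1, mt_anc V par r hgt h u2) \<in> R (real_of_ereal h))}"

definition layer_order_of :: "'v set \<Rightarrow> ('v \<Rightarrow> 'v) \<Rightarrow> 'v \<Rightarrow> ('v \<Rightarrow> ereal) \<Rightarrow> ('v \<times> ereal) rel \<Rightarrow> real \<Rightarrow> ('v \<times> ereal) rel" where
  "layer_order_of V par r hgt S h =
     {(x1, x2). x1 \<in> mt_layer V par r hgt h \<and> x2 \<in> mt_layer V par r hgt h \<and>
        (x1 = x2 \<or>
         (\<forall>u1 \<in> mt_leaves V par r hgt \<inter> mt_subtree V par r hgt x1.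
          \<forall>u2 \<in> mt_leaves V par r hgt \<inter> mt_subtree V par r hgt x2. (u1, u2) \<in> S))}"

end

theory Submission
  imports Defs
begin

locale mtl =
  fixes V :: "'v set" and par :: "'v \<Rightarrow> 'v" and r :: 'v and hgt :: "'v \<Rightarrow> ereal"
  assumes mt: "merge_tree V par r hgt"
begin

abbreviation "pt \<equiv> mt_point V par r hgt"

lemma finV: "finite V" and rV: "r \<in> V" and hr: "hgt r = \<infinity>" and pr: "par r = r"
  and parV: "\<And>v. v \<in> V \<Longrightarrow> v \<noteq> r \<Longrightarrow> par v \<in> V"
  and hlt: "\<And>v. v \<in> V \<Longrightarrow> v \<noteq> r \<Longrightarrow> hgt v < hgt (par v)"
  and reach: "\<And>v. v \<in> V \<Longrightarrow> \<exists>n. (par ^^ n) v = r"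
  using mt unfolding merge_tree_def by auto

lemma leaf_nonneg: "u \<in> mt_leaves V par r hgt \<Longrightarrow> 0 \<le> snd u"
  using mt unfolding merge_tree_def by auto

lemma parV': "v \<in> V \<Longrightarrow> par v \<in> V"
  using parV pr by (cases "v = r") auto

lemma powV: "v \<in> V \<Longrightarrow> (par ^^ n) v \<in> V"
  by (induction n) (auto intro: parV')

lemma hle_par: "v \<in> V \<Longrightarrow> hgt v \<le> hgt (par v)"
  using hlt pr by (cases "v = r") (auto intro: less_imp_le)

lemma pow_mono: "v \<in> V \<Longrightarrow> hgt v \<le> hgt ((par ^^ n) v)"
proof (induction n)
  case 0 then show ?case by simp
next
  case (Suc n)
  then show ?case using hle_par[OF powV[OF Suc.prems, of n]] by (auto intro: order_trans)
qed

lemma pow_strict: "v \<in> V \<Longrightarrow> v \<noteq> r \<Longrightarrow> n \<ge> 1 \<Longrightarrow> hgt (par v) \<le> hgt ((par ^^ n) v)"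
proof -
  assume a: "v \<in> V" "v \<noteq> r" "n \<ge> 1"
  then obtain m where n: "n = Suc m" by (cases n) auto
  have "(par ^^ n) v = (par ^^ m) (par v)" unfolding n by (metis funpow_Suc_right comp_apply)
  then show ?thesis using pow_mono[OF parV'[OF a(1)], of m] by simp
qed

lemma pow_r: "(par ^^ n) r = r"
  by (induction n) (auto simp: pr)

lemma pt_le: "pt y \<Longrightarrow> hgt (fst y) \<le> snd y"
  unfolding mt_point_def using hr by auto

lemma same_height:
  assumes "pt y1" "pt y2" "snd y1 = snd y2" "(par ^^ n) (fst y1) = fst y2"
  shows "y1 = y2"
proof (cases "fst y1 = r")
  case True
  then have "fst y2 = r" using assms(4) pow_r by simp
  then show ?thesis using True assms(3) by (simp add: prod_eq_iff)
next
  case False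
  show ?thesis
  proof (cases n)
    case 0 then show ?thesis using assms by (simp add: prod_eq_iff)
  next
    case (Suc m)
    have y1: "fst y1 \<in> V" "snd y1 < hgt (par (fst y1))" using assms(1) False unfolding mt_point_def by auto
    have "hgt (par (fst y1)) \<le> hgt (fst y2)" using pow_strict[OF y1(1) False, of n] Suc assms(4) by simp
    also have "\<dots> \<le> snd y2" using pt_le[OF assms(2)] .
    finally show ?thesis using y1 assms(3) by simp
  qed
qed

lemma anc_trans: "mt_anc_rel par x y \<Longrightarrow> mt_anc_rel par y z \<Longrightarrow> mt_anc_rel par x z"
  unfolding mt_anc_rel_def
proof (elim conjE exE, intro conjI)
  fix a b assume "snd x \<le> snd y" "snd y \<le> snd z" "(par ^^ a) (fst x) = fst y" "(par ^^ b) (fst y) = fst z"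
  then show "snd x \<le> snd z" "\<exists>n. (par ^^ n) (fst x) = fst z"
    by (auto simp: funpow_add intro!: exI[of _ "b + a"])
qed

lemma anc_refl: "mt_anc_rel par x x"
  unfolding mt_anc_rel_def by (auto intro: exI[of _ 0])

lemma anc_unique:
  assumes "pt y1" "pt y2" "mt_anc_rel par x y1" "mt_anc_rel par x y2" "snd y1 = snd y2"
  shows "y1 = y2"
proof -
  obtain i j where i: "(par ^^ i) (fst x) = fst y1" and j: "(par ^^ j) (fst x) = fst y2"
    using assms(3,4) unfolding mt_anc_rel_def by auto
  show ?thesis
  proof (cases "i \<le> j")
    case True
    have "(par ^^ (j - i)) (fst y1) = fst y2" using i j True
      by (metis funpow_add le_add_diff_inverse2 o_apply)
    then show ?thesis using same_height assms by blast
  next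
    case False
    have "(par ^^ (i - j)) (fst y2) = fst y1" using i j False
      by (metis funpow_add le_add_diff_inverse2 o_apply nat_le_linear)
    then show ?thesis using same_height assms by (metis)
  qed
qed

lemma anc_exists:
  assumes "pt x" "snd x \<le> ereal k"
  shows "\<exists>y. pt y \<and> mt_anc_rel par x y \<and> snd y = ereal k"
proof -
  let ?v = "fst x"
  have v: "?v \<in> V" using assms(1) unfolding mt_point_def by auto
  obtain m where m: "(par ^^ m) ?v = r" using reach[OF v] by auto
  define N where "N = {n. hgt ((par ^^ n) ?v) \<le> ereal k}"
  have big: "n \<ge> m \<Longrightarrow> n \<notin> N" for n
  proof -
    assume "n \<ge> m"
    then have "(par ^^ n) ?v = (par ^^ (n - m)) ((par ^^ m) ?v)"
      by (metis funpow_add le_add_diff_inverse2 o_apply)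
    then have "(par ^^ n) ?v = r" using m pow_r by simp
    then show "n \<notin> N" unfolding N_def using hr by simp
  qed
  have finN: "finite N" using big by (metis finite_nat_set_iff_bounded not_less)
  have N0: "0 \<in> N" unfolding N_def using pt_le[OF assms(1)] assms(2) by auto
  define n where "n = Max N"
  have nN: "n \<in> N" unfolding n_def using finN N0 by (intro Max_in) auto
  have sn: "Suc n \<notin> N" unfolding n_def using finN N0 Max_ge by (metis Suc_n_not_le_n)
  let ?w = "(par ^^ n) ?v"
  have w: "?w \<in> V" using powV[OF v] .
  have wr: "?w \<noteq> r" using nN hr unfolding N_def by auto
  have "pt (?w, ereal k)" unfolding mt_point_def using w wr nN sn unfolding N_def by auto
  moreover have "mt_anc_rel par x (?w, ereal k)" unfolding mt_anc_rel_def using assms(2) by auto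
  ultimately show ?thesis by auto
qed

lemma anc_char:
  assumes "pt x" "snd x \<le> ereal k"
  shows "pt (mt_anc V par r hgt (ereal k) x) \<and> mt_anc_rel par x (mt_anc V par r hgt (ereal k) x)
     \<and> snd (mt_anc V par r hgt (ereal k) x) = ereal k"
proof -
  obtain y where y: "pt y \<and> mt_anc_rel par x y \<and> snd y = ereal k" using anc_exists[OF assms] by auto
  show ?thesis unfolding mt_anc_def
  proof (rule theI[of _ y])
    show "pt y \<and> mt_anc_rel par x y \<and> snd y = ereal k" using y .
  next
    fix z assume z: "pt z \<and> mt_anc_rel par x z \<and> snd z = ereal k"
    then show "z = y" using y anc_unique[of z y x] by auto
  qed
qed

lemma anc_eq:
  assumes "pt x" "pt y" "mt_anc_rel par x y" "snd y = ereal k"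
  shows "mt_anc V par r hgt (ereal k) x = y"
proof -
  have "snd x \<le> ereal k" using assms(3,4) unfolding mt_anc_rel_def by auto
  then show ?thesis using anc_char[OF assms(1)] anc_unique assms by metis
qed

lemma anc_anc:
  assumes "pt u" "snd u \<le> ereal c" "c \<le> h"
  shows "mt_anc V par r hgt (ereal h) (mt_anc V par r hgt (ereal c) u) = mt_anc V par r hgt (ereal h) u"
proof -
  let ?p = "mt_anc V par r hgt (ereal c) u"
  have p: "pt ?p" "mt_anc_rel par u ?p" "snd ?p = ereal c" using anc_char[OF assms(1,2)] by auto
  have q: "pt (mt_anc V par r hgt (ereal h) ?p)" "mt_anc_rel par ?p (mt_anc V par r hgt (ereal h) ?p)"
    "snd (mt_anc V par r hgt (ereal h) ?p) = ereal h" using anc_char[OF p(1)] p(3) assms(3) by auto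
  show ?thesis using anc_eq[OF assms(1) q(1) anc_trans[OF p(2) q(2)] q(3)] by simp
qed

lemma leaf_exists:
  assumes "pt x" "snd x = ereal h"
  shows "\<exists>u. u \<in> mt_leaves V par r hgt \<and> u \<in> mt_subtree V par r hgt x"
proof -
  define S where "S = {w \<in> V - {r}. mt_anc_rel par (w, hgt w) x}"
  have vS: "fst x \<in> S" unfolding S_def mt_anc_rel_def using assms pt_le[OF assms(1)] hr
    unfolding mt_point_def by (auto intro: exI[of _ 0])
  have finS: "finite S" unfolding S_def using finV by auto
  define m where "m = Min (hgt ` S)"
  have "m \<in> hgt ` S" unfolding m_def using finS vS by (intro Min_in) auto
  then obtain w where wS: "w \<in> S" and hw: "hgt w = m" by auto
  have minS: "w' \<in> S \<Longrightarrow> hgt w \<le> hgt w'" for w' unfolding hw m_def using finS by auto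
  have wV: "w \<in> V" "w \<noteq> r" "mt_anc_rel par (w, hgt w) x" using wS unfolding S_def by auto
  have ptw: "pt (w, hgt w)" unfolding mt_point_def using wV hlt by auto
  have sub: "mt_subtree V par r hgt (w, hgt w) = {(w, hgt w)}"
  proof (rule set_eqI, rule iffI)
    fix y assume "y \<in> mt_subtree V par r hgt (w, hgt w)"
    then have y: "pt y" "mt_anc_rel par y (w, hgt w)" unfolding mt_subtree_def by auto
    then obtain n where n: "(par ^^ n) (fst y) = w" and sy: "snd y \<le> hgt w"
      unfolding mt_anc_rel_def by auto
    have yr: "fst y \<noteq> r" using n pow_r wV by auto
    have yV: "fst y \<in> V" using y unfolding mt_point_def by auto
    have "mt_anc_rel par (fst y, hgt (fst y)) (w, hgt w)"
      unfolding mt_anc_rel_def using n sy pt_le[OF y(1)] by auto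
    then have "fst y \<in> S" unfolding S_def using anc_trans wV yV yr by auto
    then have "hgt w \<le> hgt (fst y)" using minS by auto
    then have e: "hgt (fst y) = hgt w" "snd y = hgt w" using pt_le[OF y(1)] sy by auto
    have "n = 0"
    proof (rule ccontr)
      assume "n \<noteq> 0"
      then have "hgt (par (fst y)) \<le> hgt w" using pow_strict[OF yV yr, of n] n by simp
      then show False using hlt[OF yV yr] e by simp
    qed
    then show "y \<in> {(w, hgt w)}" using n e by (simp add: prod_eq_iff)
  next
    fix y assume "y \<in> {(w, hgt w)}"
    then show "y \<in> mt_subtree V par r hgt (w, hgt w)" unfolding mt_subtree_def using ptw anc_refl by auto
  qed
  have "(w, hgt w) \<in> mt_leaves V par r hgt" unfolding mt_leaves_def using ptw sub by auto
  moreover have "(w, hgt w) \<in> mt_subtree V par r hgt x" unfolding mt_subtree_def using ptw wV by auto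
  ultimately show ?thesis by blast
qed

end

theorem lemma8:
  fixes V :: "'v set" and par :: "'v \<Rightarrow> 'v" and r :: 'v and hgt :: "'v \<Rightarrow> ereal"
    and R :: "real \<Rightarrow> ('v \<times> ereal) rel"
  assumes "ordered_merge_tree V par r hgt R"
  shows "\<forall>h\<ge>0. layer_order_of V par r hgt (leaf_order_of V par r hgt R) h = R h"
proof (intro allI impI)
  fix h :: real assume h0: "0 \<le> h"
  have mt: "merge_tree V par r hgt" and lo: "layer_order V par r hgt R"
    using assms unfolding ordered_merge_tree_def by auto
  interpret mtl V par r hgt using mt by unfold_locales
  let ?L = "mt_layer V par r hgt"
  let ?lv = "mt_leaves V par r hgt"
  let ?st = "mt_subtree V par r hgt"
  let ?anc = "mt_anc V par r hgt"
  have Rsub: "\<And>c. 0 \<le> c \<Longrightarrow> R c \<subseteq> ?L c \<times> ?L c"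
    and lin: "\<And>c. 0 \<le> c \<Longrightarrow> linear_order_on (?L c) (R c)"
    and cons: "\<And>h1 h2 x1 x2. 0 \<le> h1 \<Longrightarrow> h1 \<le> h2 \<Longrightarrow> (x1, x2) \<in> R h1 \<Longrightarrow>
        (?anc (ereal h2) x1, ?anc (ereal h2) x2) \<in> R h2"
    using lo unfolding layer_order_def by auto
  have refl: "\<And>c x. 0 \<le> c \<Longrightarrow> x \<in> ?L c \<Longrightarrow> (x, x) \<in> R c"
    using lin unfolding linear_order_on_def partial_order_on_def preorder_on_def refl_on_def by blast
  have antis: "\<And>c x y. 0 \<le> c \<Longrightarrow> (x, y) \<in> R c \<Longrightarrow> (y, x) \<in> R c \<Longrightarrow> x = y"
    using lin unfolding linear_order_on_def partial_order_on_def antisym_def by blast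
  have tot: "\<And>c x y. 0 \<le> c \<Longrightarrow> x \<in> ?L c \<Longrightarrow> y \<in> ?L c \<Longrightarrow> x = y \<or> (x, y) \<in> R c \<or> (y, x) \<in> R c"
    using lin unfolding linear_order_on_def total_on_def by blast
  have leafinfo: "\<exists>a. snd u = ereal a \<and> 0 \<le> a \<and> a \<le> h \<and> pt u \<and> ?anc (ereal h) u = x"
    if "x \<in> ?L h" "u \<in> ?lv" "u \<in> ?st x" for x u
  proof -
    have x: "pt x" "snd x = ereal h" using that(1) unfolding mt_layer_def by auto
    have u: "pt u" "mt_anc_rel par u x" using that(3) unfolding mt_subtree_def by auto
    have le: "snd u \<le> ereal h" using u(2) x(2) unfolding mt_anc_rel_def by auto
    have ge: "0 \<le> snd u" using leaf_nonneg[OF that(2)] .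
    obtain a where a: "snd u = ereal a" using le ge by (cases "snd u") auto
    show ?thesis using a le ge u anc_eq[OF u(1) x(1) u(2) x(2)] by auto
  qed
  have key: "(?anc (ereal (max a b)) u1, ?anc (ereal (max a b)) u2) \<in> R (max a b)
      \<Longrightarrow> (x1, x2) \<in> R h"
    if H: "x1 \<in> ?L h" "x2 \<in> ?L h" "u1 \<in> ?lv" "u1 \<in> ?st x1" "u2 \<in> ?lv" "u2 \<in> ?st x2"
       "snd u1 = ereal a" "snd u2 = ereal b" for x1 x2 u1 u2 a b
  proof -
    assume R: "(?anc (ereal (max a b)) u1, ?anc (ereal (max a b)) u2) \<in> R (max a b)"
    obtain a' where a': "snd u1 = ereal a'" "0 \<le> a'" "a' \<le> h" "pt u1" "?anc (ereal h) u1 = x1"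
      using leafinfo[OF H(1,3,4)] by auto
    obtain b' where b': "snd u2 = ereal b'" "0 \<le> b'" "b' \<le> h" "pt u2" "?anc (ereal h) u2 = x2"
      using leafinfo[OF H(2,5,6)] by auto
    have ab: "a = a'" "b = b'" using a' b' H(7,8) by auto
    have "(?anc (ereal h) (?anc (ereal (max a b)) u1), ?anc (ereal h) (?anc (ereal (max a b)) u2)) \<in> R h"
      using cons[OF _ _ R] ab a' b' by auto
    moreover have "?anc (ereal h) (?anc (ereal (max a b)) u1) = x1"
      using anc_anc[OF a'(4), of "max a b" h] ab a' b' by auto
    moreover have "?anc (ereal h) (?anc (ereal (max a b)) u2) = x2"
      using anc_anc[OF b'(4), of "max a b" h] ab a' b' by auto
    ultimately show ?thesis by simp
  qed
  show "layer_order_of V par r hgt (leaf_order_of V par r hgt R) h = R h"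
  proof (rule set_eqI, clarify)
    fix x1 x2
    show "((x1, x2) \<in> layer_order_of V par r hgt (leaf_order_of V par r hgt R) h) = ((x1, x2) \<in> R h)"
    proof
      assume A: "(x1, x2) \<in> layer_order_of V par r hgt (leaf_order_of V par r hgt R) h"
      then have L: "x1 \<in> ?L h" "x2 \<in> ?L h" unfolding layer_order_of_def by auto
      show "(x1, x2) \<in> R h"
      proof (cases "x1 = x2")
        case True then show ?thesis using refl h0 L by simp
      next
        case False
        then have all: "\<forall>u1\<in>?lv \<inter> ?st x1. \<forall>u2\<in>?lv \<inter> ?st x2. (u1, u2) \<in> leaf_order_of V par r hgt R"
          using A unfolding layer_order_of_def by auto
        obtain u1 where u1: "u1 \<in> ?lv" "u1 \<in> ?st x1"
          using leaf_exists[of x1 h] L unfolding mt_layer_def by auto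
        obtain u2 where u2: "u2 \<in> ?lv" "u2 \<in> ?st x2"
          using leaf_exists[of x2 h] L unfolding mt_layer_def by auto
        obtain a where a: "snd u1 = ereal a" using leafinfo[OF L(1) u1] by auto
        obtain b where b: "snd u2 = ereal b" using leafinfo[OF L(2) u2] by auto
        have "(u1, u2) \<in> leaf_order_of V par r hgt R" using all u1 u2 by auto
        then have "(?anc (ereal (max a b)) u1, ?anc (ereal (max a b)) u2) \<in> R (max a b)"
          unfolding leaf_order_of_def Let_def using a b by (simp add: max_def split: if_splits)
        then show ?thesis using key[OF L u1 u2 a b] by simp
      qed
    next
      assume A: "(x1, x2) \<in> R h"
      then have L: "x1 \<in> ?L h" "x2 \<in> ?L h" using Rsub[OF h0] by auto
      show "(x1, x2) \<in> layer_order_of V par r hgt (leaf_order_of V par r hgt R) h"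
      proof (cases "x1 = x2")
        case True then show ?thesis using L unfolding layer_order_of_def by auto
      next
        case False
        have "(u1, u2) \<in> leaf_order_of V par r hgt R"
          if u1: "u1 \<in> ?lv" "u1 \<in> ?st x1" and u2: "u2 \<in> ?lv" "u2 \<in> ?st x2" for u1 u2
        proof -
          obtain a where a: "snd u1 = ereal a" "0 \<le> a" "pt u1" using leafinfo[OF L(1) u1] by auto
          obtain b where b: "snd u2 = ereal b" "0 \<le> b" "pt u2" using leafinfo[OF L(2) u2] by auto
          let ?c = "max a b"
          have c0: "0 \<le> ?c" using a by simp
          have p1: "?anc (ereal ?c) u1 \<in> ?L ?c" unfolding mt_layer_def
            using anc_char[OF a(3), of ?c] a by auto
          have p2: "?anc (ereal ?c) u2 \<in> ?L ?c" unfolding mt_layer_def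
            using anc_char[OF b(3), of ?c] b by auto
          have "(?anc (ereal ?c) u1, ?anc (ereal ?c) u2) \<in> R ?c"
          proof -
            consider "?anc (ereal ?c) u1 = ?anc (ereal ?c) u2"
              | "(?anc (ereal ?c) u1, ?anc (ereal ?c) u2) \<in> R ?c"
              | "(?anc (ereal ?c) u2, ?anc (ereal ?c) u1) \<in> R ?c"
              using tot[OF c0 p1 p2] by blast
            then show ?thesis
            proof cases
              case 1 then show ?thesis using refl[OF c0 p1] by simp
            next
              case 2 then show ?thesis .
            next
              case 3
              then have "(x2, x1) \<in> R h" using key[OF L(2,1) u2 u1 b(1) a(1)] by (simp add: max.commute)
              then have "x1 = x2" using antis[OF h0 A] by simp
              then show ?thesis using False by simp
            qed
          qed
          then show ?thesis unfolding leaf_order_of_def Let_def using a b u1 u2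
            by (simp add: max_def split: if_splits)
        qed
        then show ?thesis using L unfolding layer_order_of_def by auto
      qed
    qed
  qed
qed


end
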